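(* Let $\mathcal{G}$ be a graph with exactly two zealots, with opinions $-1$ and $1$, satisfying the balanced-exposure condition: no persuadable node is adjacent to exactly one zealot. Consider the SBCM on $\mathcal{G}$ with parameters $\gamma,\delta\ge0$, let $v=\omega(1)=\frac{1}{1+e^{\gamma-\gamma\delta}}$ and $g(\gamma)=2\gamma(1-v)-1$. Then (1) for every $\gamma$, the harmonic state $\bar{\mathbf{x}}$, in which every persuadable node has opinion $0$, is a steady state; and (2) $\bar{\mathbf{x}}$ is linearly stable if and only if $g(\gamma)<0$.
   Context: Let $\mathcal{G}$ be a finite undirected unweighted graph without self-loops, adjacency $i\sim j$, with nodes partitioned into zealots $\mathcal{Z}$ and persuadable nodes $\mathcal{P}$. With $w(x_i,x_j)=\omega(|x_i-x_j|)=\frac{1}{1+e^{\gamma(x_i-x_j)^2-\gamma\delta}}$ for $i\sim j$ and $0$ otherwise, the SBCM is $\frac{dx_i}{dt}=f_i(\mathbf{x})=\frac{\sum_j w(x_i,x_j)(x_j-x_i)}{\sum_j w(x_i,x_j)}$ for $i\in\mathcal{P}$ and $\frac{dx_i}{dt}=0$ for zealots. A steady state is linearly stable if all eigenvalues of $\mathbf{J}_{\mathcal{P}}=(\partial f_i/\partial x_j)_{i,j\in\mathcal{P}}$ at it are strictly negative. *)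

theory Defs
  imports "HOL-Analysis.Analysis"
begin

definition simple_graph :: "'a set \<Rightarrow> ('a \<Rightarrow> 'a \<Rightarrow> bool) \<Rightarrow> bool" where
  "simple_graph V E \<longleftrightarrow> finite V \<and> (\<forall>a b. E a b \<longrightarrow> a \<in> V \<and> b \<in> V)
     \<and> (\<forall>a b. E a b \<longrightarrow> E b a) \<and> (\<forall>a. \<not> E a a)"

definition graph_connected :: "'a set \<Rightarrow> ('a \<Rightarrow> 'a \<Rightarrow> bool) \<Rightarrow> bool" where
  "graph_connected V E \<longleftrightarrow> (\<forall>a\<in>V. \<forall>b\<in>V. E\<^sup>*\<^sup>* a b)"

definition omega :: "real \<Rightarrow> real \<Rightarrow> real \<Rightarrow> real" where
  "omega \<gamma> \<delta> r = 1 / (1 + exp (\<gamma> * r\<^sup>2 - \<gamma> * \<delta>))"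

definition weight :: "('a \<Rightarrow> 'a \<Rightarrow> bool) \<Rightarrow> real \<Rightarrow> real \<Rightarrow> ('a \<Rightarrow> real) \<Rightarrow> 'a \<Rightarrow> 'a \<Rightarrow> real" where
  "weight E \<gamma> \<delta> x i j = (if E i j then omega \<gamma> \<delta> \<bar>x i - x j\<bar> else 0)"

definition sbcm_rhs :: "'a set \<Rightarrow> ('a \<Rightarrow> 'a \<Rightarrow> bool) \<Rightarrow> real \<Rightarrow> real \<Rightarrow> ('a \<Rightarrow> real) \<Rightarrow> 'a \<Rightarrow> real" where
  "sbcm_rhs V E \<gamma> \<delta> x i =
     (\<Sum>j\<in>V. weight E \<gamma> \<delta> x i j * (x j - x i)) / (\<Sum>j\<in>V. weight E \<gamma> \<delta> x i j)"

text \<open>Steady state: f_i(x) = 0 for every persuadable node (zealots are fixed anyway).\<close>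
definition steady_state :: "'a set \<Rightarrow> ('a \<Rightarrow> 'a \<Rightarrow> bool) \<Rightarrow> 'a set \<Rightarrow> real \<Rightarrow> real \<Rightarrow> ('a \<Rightarrow> real) \<Rightarrow> bool" where
  "steady_state V E P \<gamma> \<delta> x \<longleftrightarrow> (\<forall>i\<in>P. sbcm_rhs V E \<gamma> \<delta> x i = 0)"

definition jacobian :: "'a set \<Rightarrow> ('a \<Rightarrow> 'a \<Rightarrow> bool) \<Rightarrow> real \<Rightarrow> real \<Rightarrow> ('a \<Rightarrow> real) \<Rightarrow> 'a \<Rightarrow> 'a \<Rightarrow> real" where
  "jacobian V E \<gamma> \<delta> x i j = deriv (\<lambda>t. sbcm_rhs V E \<gamma> \<delta> (x(j := t)) i) (x j)"

definition is_eigenvalue_on :: "'a set \<Rightarrow> ('a \<Rightarrow> 'a \<Rightarrow> real) \<Rightarrow> complex \<Rightarrow> bool" where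
  "is_eigenvalue_on P J mu \<longleftrightarrow> (\<exists>v :: 'a \<Rightarrow> complex. (\<exists>i\<in>P. v i \<noteq> 0) \<and>
      (\<forall>i\<in>P. (\<Sum>j\<in>P. complex_of_real (J i j) * v j) = mu * v i))"

definition linearly_stable :: "'a set \<Rightarrow> ('a \<Rightarrow> 'a \<Rightarrow> bool) \<Rightarrow> 'a set \<Rightarrow> real \<Rightarrow> real \<Rightarrow> ('a \<Rightarrow> real) \<Rightarrow> bool" where
  "linearly_stable V E P \<gamma> \<delta> x \<longleftrightarrow>
     (\<forall>mu. is_eigenvalue_on P (jacobian V E \<gamma> \<delta> x) mu \<longrightarrow> Im mu = 0 \<and> Re mu < 0)"

definition harmonic_state :: "'a \<Rightarrow> 'a \<Rightarrow> 'a \<Rightarrow> real" where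
  "harmonic_state z1 z2 = (\<lambda>i. if i = z1 then -1 else if i = z2 then 1 else 0)"

end

theory Submission
  imports Defs
begin

definition Hf :: "real \<Rightarrow> real \<Rightarrow> real \<Rightarrow> real" where
  "Hf g d r = 1 / (1 + exp (g * r\<^sup>2 - g * d))"

definition Hd :: "real \<Rightarrow> real \<Rightarrow> real \<Rightarrow> real" where
  "Hd g d r = - (2 * g * r) * exp (g * r\<^sup>2 - g * d) / (1 + exp (g * r\<^sup>2 - g * d))\<^sup>2"

lemma omega_abs: "omega g d \<bar>r\<bar> = Hf g d r"
  by (simp add: omega_def Hf_def)

lemma weight_eq: "weight E g d x i k = (if E i k then Hf g d (x i - x k) else 0)"
  by (simp add: weight_def omega_abs)

lemma Hf_deriv: "(Hf g d has_real_derivative Hd g d r) (at r)"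
proof -
  have pos: "1 + exp (g * r\<^sup>2 - g * d) \<noteq> 0"
    by (metis exp_gt_zero add_pos_pos zero_less_one less_irrefl)
  have "((\<lambda>r. 1 / (1 + exp (g * r\<^sup>2 - g * d))) has_real_derivative Hd g d r) (at r)"
    apply (rule derivative_eq_intros refl | simp add: pos)+
    apply (simp add: Hd_def power2_eq_square field_simps)
    done
  then show ?thesis unfolding Hf_def[abs_def] .
qed

lemma upd_deriv: "((\<lambda>t. (x(j:=t)) m) has_real_derivative (if m = j then 1 else 0)) (at s)"
  by (cases "m = j") (auto intro: derivative_eq_intros)

lemma term_deriv:
  "((\<lambda>t. weight E g d (x(j:=t)) i k * ((x(j:=t)) k - (x(j:=t)) i)) has_real_derivative
     (if E i k then Hd g d ((x(j:=s)) i - (x(j:=s)) k) * ((if i = j then 1 else 0) - (if k = j then 1 else 0))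
          * ((x(j:=s)) k - (x(j:=s)) i)
        + Hf g d ((x(j:=s)) i - (x(j:=s)) k) * ((if k = j then 1 else 0) - (if i = j then 1 else 0))
      else 0)) (at s)"
proof (cases "E i k")
  case True
  have d1: "((\<lambda>t. (x(j:=t)) i - (x(j:=t)) k) has_real_derivative
      ((if i = j then 1 else 0) - (if k = j then 1 else 0))) (at s)"
    by (intro derivative_intros upd_deriv)
  have d2: "((\<lambda>t. Hf g d ((x(j:=t)) i - (x(j:=t)) k)) has_real_derivative
      Hd g d ((x(j:=s)) i - (x(j:=s)) k) * ((if i = j then 1 else 0) - (if k = j then 1 else 0))) (at s)"
    by (rule DERIV_chain'[OF d1 Hf_deriv])
  have d3: "((\<lambda>t. (x(j:=t)) k - (x(j:=t)) i) has_real_derivative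
      ((if k = j then 1 else 0) - (if i = j then 1 else 0))) (at s)"
    by (intro derivative_intros upd_deriv)
  show ?thesis using DERIV_mult[OF d2 d3] True
    by (simp add: weight_eq algebra_simps)
qed (simp add: weight_eq)

lemma weight_deriv:
  "((\<lambda>t. weight E g d (x(j:=t)) i k) has_real_derivative
     (if E i k then Hd g d ((x(j:=s)) i - (x(j:=s)) k) * ((if i = j then 1 else 0) - (if k = j then 1 else 0))
      else 0)) (at s)"
proof (cases "E i k")
  case True
  have d1: "((\<lambda>t. (x(j:=t)) i - (x(j:=t)) k) has_real_derivative
      ((if i = j then 1 else 0) - (if k = j then 1 else 0))) (at s)"
    by (intro derivative_intros upd_deriv)
  show ?thesis using DERIV_chain'[OF d1 Hf_deriv] True
    by (simp add: weight_eq)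
qed (simp add: weight_eq)

lemma deriv_quot0:
  assumes "(N has_real_derivative N') (at a)" "(Dn has_real_derivative D') (at a)"
    "Dn a \<noteq> 0" "N a = 0"
  shows "deriv (\<lambda>t. N t / Dn t) a = N' / Dn a"
proof -
  have "((\<lambda>t. N t / Dn t) has_real_derivative (N' * Dn a - N a * D') / (Dn a * Dn a)) (at a)"
    by (rule DERIV_divide[OF assms(1,2,3)])
  then have "deriv (\<lambda>t. N t / Dn t) a = (N' * Dn a - N a * D') / (Dn a * Dn a)"
    by (rule DERIV_imp_deriv)
  with assms(3,4) show ?thesis by (simp add: field_simps)
qed

locale sb =
  fixes V :: "'a set" and E :: "'a \<Rightarrow> 'a \<Rightarrow> bool" and z1 z2 :: 'a and \<gamma> \<delta> :: real
  assumes graph: "simple_graph V E"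
    and conn: "graph_connected V E"
    and z1V: "z1 \<in> V" and z2V: "z2 \<in> V" and z12: "z1 \<noteq> z2"
    and balanced: "\<forall>i \<in> V - {z1, z2}. E i z1 \<longleftrightarrow> E i z2"
    and gpos: "\<gamma> \<ge> 0" and dpos: "\<delta> \<ge> 0"
begin

abbreviation "P \<equiv> V - {z1, z2}"
abbreviation "xb \<equiv> harmonic_state z1 z2"
definition "u = omega \<gamma> \<delta> 0"
definition "v = omega \<gamma> \<delta> 1"
definition "gg = 2 * \<gamma> * (1 - v) - 1"
definition "p i = real (card {k\<in>P. E i k})"
definition "bz i = (if E i z1 then 1 else 0 :: real)"
definition "Dg i = u * p i + 2 * v * bz i"
definition "M i j = (if E i j then u else 0) + (if i = j then - u * p i + 2 * v * gg * bz i else 0)"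

lemma finV: "finite V" using graph by (simp add: simple_graph_def)
lemma finP: "finite P" using finV by simp
lemma EV: "E a b \<Longrightarrow> a \<in> V \<and> b \<in> V" using graph by (simp add: simple_graph_def)
lemma Esym: "E a b \<Longrightarrow> E b a" using graph by (simp add: simple_graph_def)
lemma Eirr: "\<not> E a a" using graph by (simp add: simple_graph_def)
lemma bal: "i \<in> P \<Longrightarrow> E i z2 = E i z1" using balanced by auto

lemma u_pos: "u > 0" by (simp add: u_def omega_def add_pos_pos)
lemma v_pos: "v > 0" by (simp add: v_def omega_def add_pos_pos)
lemma v_lt1: "v < 1" by (simp add: v_def omega_def add_pos_pos)
lemma Hf0: "Hf \<gamma> \<delta> 0 = u" by (simp add: u_def Hf_def omega_def)
lemma Hf1: "Hf \<gamma> \<delta> 1 = v" by (simp add: v_def Hf_def omega_def)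
lemma Hfm1: "Hf \<gamma> \<delta> (-1) = v" by (simp add: v_def Hf_def omega_def)
lemma Hd1: "Hd \<gamma> \<delta> 1 = - 2 * \<gamma> * v * (1 - v)"
proof -
  have e: "1 + exp (\<gamma> - \<gamma> * \<delta>) > 0" by (simp add: add_pos_pos)
  then show ?thesis by (simp add: Hd_def v_def omega_def field_simps power2_eq_square)
qed
lemma Hdm1: "Hd \<gamma> \<delta> (-1) = 2 * \<gamma> * v * (1 - v)"
proof -
  have e: "1 + exp (\<gamma> - \<gamma> * \<delta>) > 0" by (simp add: add_pos_pos)
  then show ?thesis by (simp add: Hd_def v_def omega_def field_simps power2_eq_square)
qed

lemma xb_z1: "xb z1 = -1" by (simp add: harmonic_state_def)
lemma xb_z2: "xb z2 = 1" using z12 by (simp add: harmonic_state_def)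
lemma xb_P: "k \<in> P \<Longrightarrow> xb k = 0" by (simp add: harmonic_state_def)

lemma split_sum:
  assumes i: "i \<in> P"
  shows "(\<Sum>k\<in>V. if E i k then c k else 0) =
    (\<Sum>k\<in>P. if E i k then c k else 0) + (if E i z1 then c z1 + c z2 else 0)"
proof -
  have V: "V = P \<union> {z1, z2}" using z1V z2V by auto
  have "(\<Sum>k\<in>P \<union> {z1,z2}. if E i k then c k else 0) =
    (\<Sum>k\<in>P. if E i k then c k else 0) + (\<Sum>k\<in>{z1,z2}. if E i k then c k else 0)"
    by (rule sum.union_disjoint) (use finP in auto)
  then have "(\<Sum>k\<in>V. if E i k then c k else 0) =
    (\<Sum>k\<in>P. if E i k then c k else 0) + (\<Sum>k\<in>{z1,z2}. if E i k then c k else 0)"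
    by (simp only: V[symmetric])
  also have "(\<Sum>k\<in>{z1,z2}. if E i k then c k else 0) = (if E i z1 then c z1 + c z2 else 0)"
    using z12 bal[OF i] by simp
  finally show ?thesis .
qed

lemma sumP_const: "(\<Sum>k\<in>P. if E i k then c else 0) = c * p i"
proof -
  have "(\<Sum>k\<in>P. if E i k then c else 0) = (\<Sum>k\<in>{k\<in>P. E i k}. c)"
    by (rule sum.inter_filter[symmetric]) (rule finP)
  then show ?thesis by (simp add: p_def)
qed

lemma steady_num: "i \<in> P \<Longrightarrow> (\<Sum>k\<in>V. weight E \<gamma> \<delta> xb i k * (xb k - xb i)) = 0"
proof -
  assume i: "i \<in> P"
  have "(\<Sum>k\<in>V. weight E \<gamma> \<delta> xb i k * (xb k - xb i)) =
     (\<Sum>k\<in>V. if E i k then Hf \<gamma> \<delta> (xb i - xb k) * (xb k - xb i) else 0)"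
    by (intro sum.cong) (simp_all add: weight_eq)
  also have "\<dots> = (\<Sum>k\<in>P. if E i k then Hf \<gamma> \<delta> (xb i - xb k) * (xb k - xb i) else 0)
     + (if E i z1 then Hf \<gamma> \<delta> (xb i - xb z1) * (xb z1 - xb i) + Hf \<gamma> \<delta> (xb i - xb z2) * (xb z2 - xb i) else 0)"
    by (rule split_sum[OF i])
  also have "(\<Sum>k\<in>P. if E i k then Hf \<gamma> \<delta> (xb i - xb k) * (xb k - xb i) else 0) = 0"
    using i by (intro sum.neutral) (simp add: xb_P)
  finally show ?thesis using i by (simp add: xb_P xb_z1 xb_z2 Hf1 Hfm1)
qed

lemma den_xb: "i \<in> P \<Longrightarrow> (\<Sum>k\<in>V. weight E \<gamma> \<delta> xb i k) = Dg i"
proof -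
  assume i: "i \<in> P"
  have "(\<Sum>k\<in>V. weight E \<gamma> \<delta> xb i k) = (\<Sum>k\<in>V. if E i k then Hf \<gamma> \<delta> (xb i - xb k) else 0)"
    by (simp add: weight_eq)
  also have "\<dots> = (\<Sum>k\<in>P. if E i k then Hf \<gamma> \<delta> (xb i - xb k) else 0)
     + (if E i z1 then Hf \<gamma> \<delta> (xb i - xb z1) + Hf \<gamma> \<delta> (xb i - xb z2) else 0)"
    by (rule split_sum[OF i])
  also have "(\<Sum>k\<in>P. if E i k then Hf \<gamma> \<delta> (xb i - xb k) else 0) = (\<Sum>k\<in>P. if E i k then u else 0)"
    using i by (intro sum.cong) (simp_all add: xb_P Hf0)
  finally show ?thesis using i by (simp add: xb_P xb_z1 xb_z2 Hf1 Hfm1 sumP_const Dg_def bz_def)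
qed

lemma has_nb: "i \<in> P \<Longrightarrow> \<exists>k. E i k"
proof -
  assume i: "i \<in> P"
  have "E\<^sup>*\<^sup>* i z1" using conn i z1V by (simp add: graph_connected_def)
  then show ?thesis using i by (cases rule: converse_rtranclpE) auto
qed

lemma Dg_pos: "i \<in> P \<Longrightarrow> Dg i > 0"
proof -
  assume i: "i \<in> P"
  obtain k where k: "E i k" using has_nb[OF i] by blast
  show ?thesis
  proof (cases "k \<in> P")
    case True
    then have "{k\<in>P. E i k} \<noteq> {}" using k by auto
    then have "card {k\<in>P. E i k} > 0" using finP by (simp add: card_gt_0_iff)
    then have "p i > 0" by (simp add: p_def)
    then show ?thesis using u_pos v_pos by (simp add: Dg_def bz_def add_pos_nonneg)
  next
    case False
    then have "k = z1 \<or> k = z2" using EV[OF k] by auto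
    then have "E i z1" using k bal[OF i] by auto
    moreover have "p i \<ge> 0" by (simp add: p_def)
    ultimately show ?thesis using u_pos v_pos by (simp add: Dg_def bz_def add_nonneg_pos)
  qed
qed


lemma Nprime:
  assumes i: "i \<in> P" and j: "j \<in> P"
  shows "(\<Sum>k\<in>V. if E i k then Hd \<gamma> \<delta> (xb i - xb k) * ((if i = j then 1 else 0) - (if k = j then 1 else 0))
          * (xb k - xb i)
        + Hf \<gamma> \<delta> (xb i - xb k) * ((if k = j then 1 else 0) - (if i = j then 1 else 0))
      else 0) = M i j"
    (is "(\<Sum>k\<in>V. if E i k then ?c k else 0) = _")
proof -
  define di :: real where "di = (if i = j then 1 else 0)"
  have A: "(\<Sum>k\<in>P. if E i k then ?c k else 0) = (if E i j then u else 0) - u * di * p i"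
  proof -
    have "(\<Sum>k\<in>P. if E i k then ?c k else 0) =
      (\<Sum>k\<in>P. (if k = j then (if E i k then u else 0) else 0) - (if E i k then u * di else 0))"
      using i by (intro sum.cong) (auto simp: xb_P Hf0 di_def)
    moreover have "(\<Sum>k\<in>P. if k = j then (if E i k then u else 0) else 0) = (if E i j then u else 0)"
      using j finP by (subst sum.delta) auto
    ultimately show ?thesis by (simp add: sum_subtractf sumP_const)
  qed
  have B: "(if E i z1 then ?c z1 + ?c z2 else 0) = (if E i z1 then 2 * v * gg * di else 0)"
    using i j z12 by (auto simp add: xb_P xb_z1 xb_z2 Hf1 Hfm1 Hd1 Hdm1 gg_def di_def algebra_simps)
  have "(\<Sum>k\<in>V. if E i k then ?c k else 0) =
      (\<Sum>k\<in>P. if E i k then ?c k else 0) + (if E i z1 then ?c z1 + ?c z2 else 0)"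
    by (rule split_sum[OF i])
  also have "\<dots> = ((if E i j then u else 0) - u * di * p i) + (if E i z1 then 2 * v * gg * di else 0)"
    unfolding A B ..
  also have "\<dots> = M i j" by (simp add: M_def di_def bz_def)
  finally show ?thesis .
qed

lemma jac: assumes i: "i \<in> P" and j: "j \<in> P"
  shows "jacobian V E \<gamma> \<delta> xb i j = M i j / Dg i"
proof -
  let ?N = "\<lambda>t. \<Sum>k\<in>V. weight E \<gamma> \<delta> (xb(j:=t)) i k * ((xb(j:=t)) k - (xb(j:=t)) i)"
  let ?D = "\<lambda>t. \<Sum>k\<in>V. weight E \<gamma> \<delta> (xb(j:=t)) i k"
  have eq: "(\<lambda>t. sbcm_rhs V E \<gamma> \<delta> (xb(j := t)) i) = (\<lambda>t. ?N t / ?D t)"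
    by (simp add: sbcm_rhs_def)
  have upd: "xb(j := xb j) = xb" by (rule fun_upd_triv)
  have dN: "(?N has_real_derivative
     (\<Sum>k\<in>V. if E i k then Hd \<gamma> \<delta> (xb i - xb k) * ((if i = j then 1 else 0) - (if k = j then 1 else 0))
          * (xb k - xb i)
        + Hf \<gamma> \<delta> (xb i - xb k) * ((if k = j then 1 else 0) - (if i = j then 1 else 0))
      else 0)) (at (xb j))"
    by (rule DERIV_sum) (rule term_deriv[where x=xb and j=j and s="xb j", unfolded upd])
  have dD: "(?D has_real_derivative
     (\<Sum>k\<in>V. if E i k then Hd \<gamma> \<delta> (xb i - xb k) * ((if i = j then 1 else 0) - (if k = j then 1 else 0))
      else 0)) (at (xb j))"
    by (rule DERIV_sum) (rule weight_deriv[where x=xb and j=j and s="xb j", unfolded upd])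
  have D0: "?D (xb j) = Dg i" using den_xb[OF i] by simp
  have N0: "?N (xb j) = 0" using steady_num[OF i] by simp
  have "deriv (\<lambda>t. ?N t / ?D t) (xb j) = M i j / Dg i"
    apply (subst deriv_quot0[OF dN dD])
    using D0 N0 Dg_pos[OF i] Nprime[OF i j] by simp_all
  then show ?thesis unfolding jacobian_def eq .
qed


lemma Msym: "M i j = M j i"
  using Esym by (auto simp: M_def)

definition "Bf a c = (\<Sum>i\<in>P. \<Sum>j\<in>P. a i * M i j * c j)"
definition "Nf a = (\<Sum>i\<in>P. Dg i * (a i)\<^sup>2)"

lemma Bsym: "Bf a c = Bf c a"
proof -
  have "Bf a c = (\<Sum>j\<in>P. \<Sum>i\<in>P. a i * M i j * c j)" unfolding Bf_def by (rule sum.swap)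
  also have "\<dots> = Bf c a" unfolding Bf_def
    by (intro sum.cong refl) (simp add: Msym[of _ ] mult.commute mult.left_commute)
  finally show ?thesis .
qed

lemma Bf_row: "Bf c a = (\<Sum>i\<in>P. c i * (\<Sum>j\<in>P. M i j * a j))"
  unfolding Bf_def by (simp add: sum_distrib_left mult.assoc)

lemma Bf_add_left: "Bf (\<lambda>i. a i + c i) d = Bf a d + Bf c d"
  unfolding Bf_def by (simp add: algebra_simps sum.distrib)
lemma Bf_scale_left: "Bf (\<lambda>i. t * a i) d = t * Bf a d"
  unfolding Bf_def by (simp add: algebra_simps sum_distrib_left)
lemma Bf_add_right: "Bf d (\<lambda>i. a i + c i) = Bf d a + Bf d c"
  using Bf_add_left Bsym by metis
lemma Bf_scale_right: "Bf d (\<lambda>i. t * a i) = t * Bf d a"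
  using Bf_scale_left Bsym by metis

lemma Bf_expand: "Bf (\<lambda>i. a i + t * c i) (\<lambda>i. a i + t * c i) = Bf a a + 2 * t * Bf a c + t\<^sup>2 * Bf c c"
proof -
  have "Bf (\<lambda>i. a i + t * c i) (\<lambda>i. a i + t * c i)
     = Bf a a + t * Bf a c + (t * Bf c a + t * (t * Bf c c))"
    by (simp only: Bf_add_left Bf_add_right Bf_scale_left Bf_scale_right)
  then show ?thesis using Bsym[of c a] by (simp add: algebra_simps power2_eq_square)
qed

lemma Nf_expand: "Nf (\<lambda>i. a i + t * c i) = Nf a + 2 * t * (\<Sum>i\<in>P. Dg i * a i * c i) + t\<^sup>2 * Nf c"
  unfolding Nf_def by (simp add: algebra_simps power2_eq_square sum.distrib sum_distrib_left)

lemma Qid: "Bf a a = - (u / 2) * (\<Sum>i\<in>P. \<Sum>j\<in>P. if E i j then (a i - a j)\<^sup>2 else 0)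
    + 2 * v * gg * (\<Sum>i\<in>P. bz i * (a i)\<^sup>2)"
proof -
  have row: "(\<Sum>j\<in>P. a i * M i j * a j) = u * (\<Sum>j\<in>P. if E i j then a i * a j else 0)
      + (a i)\<^sup>2 * (- u * p i + 2 * v * gg * bz i)" if i: "i \<in> P" for i
  proof -
    have "(\<Sum>j\<in>P. a i * M i j * a j) = (\<Sum>j\<in>P. u * (if E i j then a i * a j else 0)
        + (if j = i then (a i)\<^sup>2 * (- u * p i + 2 * v * gg * bz i) else 0))"
      by (intro sum.cong) (auto simp: M_def power2_eq_square algebra_simps)
    also have "\<dots> = u * (\<Sum>j\<in>P. if E i j then a i * a j else 0)
      + (a i)\<^sup>2 * (- u * p i + 2 * v * gg * bz i)"
      using i finP by (simp add: sum.distrib sum_distrib_left[symmetric])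
    finally show ?thesis .
  qed
  have sq: "(\<Sum>i\<in>P. \<Sum>j\<in>P. if E i j then (a i - a j)\<^sup>2 else 0)
     = (\<Sum>i\<in>P. \<Sum>j\<in>P. if E i j then (a i)\<^sup>2 else 0) + (\<Sum>i\<in>P. \<Sum>j\<in>P. if E i j then (a j)\<^sup>2 else 0)
       - 2 * (\<Sum>i\<in>P. \<Sum>j\<in>P. if E i j then a i * a j else 0)"
    by (simp add: sum_subtractf sum.distrib sum_distrib_left power2_eq_square algebra_simps if_distrib
        flip: sum_subtractf sum.distrib cong: if_cong)
  have s1: "(\<Sum>i\<in>P. \<Sum>j\<in>P. if E i j then (a i)\<^sup>2 else 0) = (\<Sum>i\<in>P. (a i)\<^sup>2 * p i)"
    by (simp add: sumP_const)
  have s2: "(\<Sum>i\<in>P. \<Sum>j\<in>P. if E i j then (a j)\<^sup>2 else 0) = (\<Sum>i\<in>P. (a i)\<^sup>2 * p i)"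
  proof -
    have "(\<Sum>i\<in>P. \<Sum>j\<in>P. if E i j then (a j)\<^sup>2 else 0) = (\<Sum>j\<in>P. \<Sum>i\<in>P. if E i j then (a j)\<^sup>2 else 0)"
      by (rule sum.swap)
    also have "\<dots> = (\<Sum>j\<in>P. \<Sum>i\<in>P. if E j i then (a j)\<^sup>2 else 0)"
      using Esym by (intro sum.cong refl) metis
    finally show ?thesis by (simp add: sumP_const)
  qed
  have "Bf a a = (\<Sum>i\<in>P. u * (\<Sum>j\<in>P. if E i j then a i * a j else 0)
      + (a i)\<^sup>2 * (- u * p i + 2 * v * gg * bz i))"
    unfolding Bf_def by (intro sum.cong refl) (rule row)
  also have "\<dots> = u * (\<Sum>i\<in>P. \<Sum>j\<in>P. if E i j then a i * a j else 0)
      - u * (\<Sum>i\<in>P. (a i)\<^sup>2 * p i) + 2 * v * gg * (\<Sum>i\<in>P. bz i * (a i)\<^sup>2)"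
    by (simp add: sum.distrib sum_distrib_left algebra_simps sum_subtractf)
  finally show ?thesis unfolding sq s1 s2 by (simp add: algebra_simps)
qed


lemma conn_zero:
  assumes H1: "\<forall>i\<in>P. \<forall>j\<in>P. E i j \<longrightarrow> a i = a j"
    and H2: "\<forall>i\<in>P. E i z1 \<longrightarrow> a i = 0"
    and i: "i \<in> P"
  shows "a i = 0"
proof -
  have "E\<^sup>*\<^sup>* i z1" using conn i z1V by (simp add: graph_connected_def)
  then have "i \<in> P \<longrightarrow> a i = 0"
  proof (induction rule: converse_rtranclp_induct)
    case base
    then show ?case by simp
  next
    case (step y y')
    show ?case
    proof
      assume y: "y \<in> P"
      show "a y = 0"
      proof (cases "y' \<in> P")
        case True
        then show ?thesis using step H1 y by auto
      next
        case False
        then have "y' = z1 \<or> y' = z2" using EV[OF step(1)] by auto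
        then have "E y z1" using step(1) bal[OF y] by auto
        then show ?thesis using H2 y by auto
      qed
    qed
  qed
  then show ?thesis using i by simp
qed

lemma Bf_nonpos: "gg \<le> 0 \<Longrightarrow> Bf a a \<le> 0"
proof -
  assume g: "gg \<le> 0"
  have s1: "(\<Sum>i\<in>P. \<Sum>j\<in>P. if E i j then (a i - a j)\<^sup>2 else 0) \<ge> 0"
    by (intro sum_nonneg) auto
  have s2: "(\<Sum>i\<in>P. bz i * (a i)\<^sup>2) \<ge> 0"
    by (intro sum_nonneg) (simp add: bz_def)
  have "2 * v * gg * (\<Sum>i\<in>P. bz i * (a i)\<^sup>2) \<le> 0"
    using v_pos g s2 by (simp add: mult_nonneg_nonpos mult_nonpos_nonneg)
  moreover have "- (u / 2) * (\<Sum>i\<in>P. \<Sum>j\<in>P. if E i j then (a i - a j)\<^sup>2 else 0) \<le> 0"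
    using u_pos s1 by simp
  ultimately show ?thesis unfolding Qid by linarith
qed

lemma Bf_neg:
  assumes g: "gg < 0" and nz: "\<exists>i\<in>P. a i \<noteq> 0"
  shows "Bf a a < 0"
proof (rule ccontr)
  assume "\<not> Bf a a < 0"
  then have ge: "Bf a a \<ge> 0" by simp
  define S1 where "S1 = (\<Sum>i\<in>P. \<Sum>j\<in>P. if E i j then (a i - a j)\<^sup>2 else 0)"
  define S2 where "S2 = (\<Sum>i\<in>P. bz i * (a i)\<^sup>2)"
  have s1: "S1 \<ge> 0" unfolding S1_def by (intro sum_nonneg) auto
  have s2: "S2 \<ge> 0" unfolding S2_def by (intro sum_nonneg) (simp add: bz_def)
  have t1: "- (u / 2) * S1 \<le> 0" using u_pos s1 by simp
  have t2: "2 * v * gg * S2 \<le> 0"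
    using v_pos g s2 by (simp add: mult_nonneg_nonpos mult_nonpos_nonneg)
  have eq: "Bf a a = - (u / 2) * S1 + 2 * v * gg * S2" unfolding S1_def S2_def by (rule Qid)
  have "- (u / 2) * S1 = 0" using eq ge t1 t2 by linarith
  then have S10: "S1 = 0" using u_pos by simp
  have "2 * v * gg * S2 = 0" using eq ge t1 t2 by linarith
  then have S20: "S2 = 0" using v_pos g by simp
  have H1: "\<forall>i\<in>P. \<forall>j\<in>P. E i j \<longrightarrow> a i = a j"
  proof (intro ballI impI)
    fix i j assume i: "i \<in> P" and j: "j \<in> P" and e: "E i j"
    have nn: "\<And>i. 0 \<le> (\<Sum>j\<in>P. if E i j then (a i - a j)\<^sup>2 else 0)"
      by (intro sum_nonneg) simp
    have inner: "\<forall>i\<in>P. (\<Sum>j\<in>P. if E i j then (a i - a j)\<^sup>2 else 0) = 0"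
      using S10 unfolding S1_def by (simp add: sum_nonneg_eq_0_iff[OF finP] nn)
    then have "(\<Sum>j\<in>P. if E i j then (a i - a j)\<^sup>2 else 0) = 0" using i by blast
    then have "\<forall>j\<in>P. (if E i j then (a i - a j)\<^sup>2 else 0) = 0"
      by (simp add: sum_nonneg_eq_0_iff[OF finP])
    then have "(if E i j then (a i - a j)\<^sup>2 else 0) = 0" using j by blast
    then have "(a i - a j)\<^sup>2 = 0" using e by simp
    then show "a i = a j" by simp
  qed
  have H2: "\<forall>i\<in>P. E i z1 \<longrightarrow> a i = 0"
  proof (intro ballI impI)
    fix i assume i: "i \<in> P" and e: "E i z1"
    have "\<forall>i\<in>P. bz i * (a i)\<^sup>2 = 0"
      using S20 unfolding S2_def
      by (simp add: sum_nonneg_eq_0_iff[OF finP] bz_def)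
    then have "bz i * (a i)\<^sup>2 = 0" using i by blast
    then show "a i = 0" using e by (simp add: bz_def)
  qed
  show False using conn_zero[OF H1 H2] nz by blast
qed

lemma jac_row: "i \<in> P \<Longrightarrow> (\<Sum>j\<in>P. jacobian V E \<gamma> \<delta> xb i j * c j) = (\<Sum>j\<in>P. M i j * c j) / Dg i"
  by (simp add: jac sum_divide_distrib)

lemma Nf_pos: assumes "\<exists>i\<in>P. a i \<noteq> 0" shows "Nf a > 0"
proof -
  obtain i where i: "i \<in> P" "a i \<noteq> 0" using assms by blast
  have "Dg i * (a i)\<^sup>2 > 0" using Dg_pos[OF i(1)] i(2) by simp
  moreover have "Dg i * (a i)\<^sup>2 \<le> Nf a" unfolding Nf_def
  proof (intro member_le_sum[OF i(1)] finP)
    fix x assume "x \<in> P - {i}" then show "0 \<le> Dg x * (a x)\<^sup>2" using Dg_pos[of x] by simp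
  qed
  ultimately show ?thesis by linarith
qed

lemma Nf_nonneg: "Nf a \<ge> 0"
  unfolding Nf_def
proof (intro sum_nonneg)
  fix x assume "x \<in> P" then show "0 \<le> Dg x * (a x)\<^sup>2" using Dg_pos[of x] by simp
qed

lemma eig_neg:
  assumes g: "gg < 0" and ev: "is_eigenvalue_on P (jacobian V E \<gamma> \<delta> xb) mu"
  shows "Im mu = 0 \<and> Re mu < 0"
proof -
  obtain w where nz: "\<exists>i\<in>P. w i \<noteq> 0"
    and eq: "\<forall>i\<in>P. (\<Sum>j\<in>P. complex_of_real (jacobian V E \<gamma> \<delta> xb i j) * w j) = mu * w i"
    using ev unfolding is_eigenvalue_on_def by blast
  define a where "a i = Re (w i)" for i
  define b where "b i = Im (w i)" for i
  define \<alpha> where "\<alpha> = Re mu"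
  define \<beta> where "\<beta> = Im mu"
  have ra: "(\<Sum>j\<in>P. M i j * a j) = Dg i * (\<alpha> * a i - \<beta> * b i)" if i: "i \<in> P" for i
  proof -
    have "Re (\<Sum>j\<in>P. complex_of_real (jacobian V E \<gamma> \<delta> xb i j) * w j) = Re (mu * w i)"
      using eq i by simp
    then have "(\<Sum>j\<in>P. jacobian V E \<gamma> \<delta> xb i j * a j) = \<alpha> * a i - \<beta> * b i"
      by (simp add: Re_sum a_def b_def \<alpha>_def \<beta>_def)
    then have X: "(\<Sum>j\<in>P. jacobian V E \<gamma> \<delta> xb i j * a j) = \<alpha> * a i - \<beta> * b i" .
    have Z: "(\<Sum>j\<in>P. M i j * a j) = Dg i * (\<Sum>j\<in>P. jacobian V E \<gamma> \<delta> xb i j * a j)"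
      using jac_row[OF i, of a] Dg_pos[OF i] by simp
    show ?thesis unfolding Z X ..
  qed
  have rb: "(\<Sum>j\<in>P. M i j * b j) = Dg i * (\<beta> * a i + \<alpha> * b i)" if i: "i \<in> P" for i
  proof -
    have "Im (\<Sum>j\<in>P. complex_of_real (jacobian V E \<gamma> \<delta> xb i j) * w j) = Im (mu * w i)"
      using eq i by simp
    then have "(\<Sum>j\<in>P. jacobian V E \<gamma> \<delta> xb i j * b j) = \<beta> * a i + \<alpha> * b i"
      by (simp add: Im_sum a_def b_def \<alpha>_def \<beta>_def)
    then have X: "(\<Sum>j\<in>P. jacobian V E \<gamma> \<delta> xb i j * b j) = \<beta> * a i + \<alpha> * b i" .
    have Z: "(\<Sum>j\<in>P. M i j * b j) = Dg i * (\<Sum>j\<in>P. jacobian V E \<gamma> \<delta> xb i j * b j)"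
      using jac_row[OF i, of b] Dg_pos[OF i] by simp
    show ?thesis unfolding Z X ..
  qed
  define sab where "sab = (\<Sum>i\<in>P. Dg i * a i * b i)"
  have Baa: "Bf a a = \<alpha> * Nf a - \<beta> * sab"
  proof -
    have "Bf a a = (\<Sum>i\<in>P. \<alpha> * (Dg i * (a i)\<^sup>2) - \<beta> * (Dg i * a i * b i))"
      unfolding Bf_row
      apply (intro sum.cong refl)
      apply (subst ra, assumption)
      apply (simp add: algebra_simps power2_eq_square)
      done
    also have "\<dots> = \<alpha> * Nf a - \<beta> * sab"
      by (simp add: Nf_def sab_def sum_subtractf sum.distrib sum_distrib_left algebra_simps power2_eq_square)
    finally show ?thesis .
  qed
  have Bbb: "Bf b b = \<beta> * sab + \<alpha> * Nf b"
  proof -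
    have "Bf b b = (\<Sum>i\<in>P. \<beta> * (Dg i * a i * b i) + \<alpha> * (Dg i * (b i)\<^sup>2))"
      unfolding Bf_row
      apply (intro sum.cong refl)
      apply (subst rb, assumption)
      apply (simp add: algebra_simps power2_eq_square)
      done
    also have "\<dots> = \<beta> * sab + \<alpha> * Nf b"
      by (simp add: Nf_def sab_def sum_subtractf sum.distrib sum_distrib_left algebra_simps power2_eq_square)
    finally show ?thesis .
  qed
  have Bab: "Bf a b = \<beta> * Nf a + \<alpha> * sab"
  proof -
    have "Bf a b = (\<Sum>i\<in>P. \<beta> * (Dg i * (a i)\<^sup>2) + \<alpha> * (Dg i * a i * b i))"
      unfolding Bf_row
      apply (intro sum.cong refl)
      apply (subst rb, assumption)
      apply (simp add: algebra_simps power2_eq_square)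
      done
    also have "\<dots> = \<beta> * Nf a + \<alpha> * sab"
      by (simp add: Nf_def sab_def sum_subtractf sum.distrib sum_distrib_left algebra_simps power2_eq_square)
    finally show ?thesis .
  qed
  have Bba: "Bf b a = \<alpha> * sab - \<beta> * Nf b"
  proof -
    have "Bf b a = (\<Sum>i\<in>P. \<alpha> * (Dg i * a i * b i) - \<beta> * (Dg i * (b i)\<^sup>2))"
      unfolding Bf_row
      apply (intro sum.cong refl)
      apply (subst ra, assumption)
      apply (simp add: algebra_simps power2_eq_square)
      done
    also have "\<dots> = \<alpha> * sab - \<beta> * Nf b"
      by (simp add: Nf_def sab_def sum_subtractf sum.distrib sum_distrib_left algebra_simps power2_eq_square)
    finally show ?thesis .
  qed
  have nz2: "(\<exists>i\<in>P. a i \<noteq> 0) \<or> (\<exists>i\<in>P. b i \<noteq> 0)"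
    using nz by (auto simp: a_def b_def complex_eq_iff)
  have Npos: "Nf a + Nf b > 0"
    using nz2 Nf_pos[of a] Nf_pos[of b] Nf_nonneg[of a] Nf_nonneg[of b] by linarith
  have "\<beta> * (Nf a + Nf b) = 0" using Bsym[of a b] Bab Bba by (simp add: algebra_simps)
  then have b0: "\<beta> = 0" using Npos by simp
  have "Bf a a + Bf b b < 0"
  proof (cases "\<exists>i\<in>P. a i \<noteq> 0")
    case True
    then show ?thesis using Bf_neg[OF g True] Bf_nonpos[of b] g by linarith
  next
    case False
    then have "\<exists>i\<in>P. b i \<noteq> 0" using nz2 by blast
    then show ?thesis using Bf_neg[OF g] Bf_nonpos[of a] g by fastforce
  qed
  then have "\<alpha> * (Nf a + Nf b) < 0" using Baa Bbb by (simp add: algebra_simps)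
  then have "\<alpha> < 0" using Npos by (simp add: mult_less_0_iff)
  then show ?thesis using b0 by (simp add: \<alpha>_def \<beta>_def)
qed


lemma Nf_ge: "i \<in> P \<Longrightarrow> Dg i * (a i)\<^sup>2 \<le> Nf a"
  unfolding Nf_def
proof (intro member_le_sum finP)
  fix x assume "x \<in> P - {i}" then show "0 \<le> Dg x * (a x)\<^sup>2" using Dg_pos[of x] by simp
qed

lemma Nf_scale: "Nf (\<lambda>i. c * a i) = c\<^sup>2 * Nf a"
  unfolding Nf_def by (simp add: sum_distrib_left algebra_simps power2_eq_square)

lemma Bf_scale: "Bf (\<lambda>i. c * a i) (\<lambda>i. c * a i) = c\<^sup>2 * Bf a a"
  by (simp add: Bf_scale_left Bf_scale_right power2_eq_square)

lemma Nf_zero: "Nf a = 0 \<Longrightarrow> i \<in> P \<Longrightarrow> a i = 0"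
  using Nf_pos[of a] by force

lemma Bf_zero: "(\<forall>i\<in>P. a i = 0) \<Longrightarrow> Bf a a = 0"
  unfolding Bf_def by simp

lemma quad_aux:
  fixes R K :: real
  assumes all: "\<forall>t. 0 \<le> -2 * t * R + t\<^sup>2 * K" and R: "R \<ge> 0"
  shows "R = 0"
proof (rule ccontr)
  assume "R \<noteq> 0"
  then have Rp: "R > 0" using R by simp
  define t where "t = R / (\<bar>K\<bar> + 1)"
  have tp: "t > 0" using Rp by (simp add: t_def add_pos_nonneg)
  have t1: "t * (\<bar>K\<bar> + 1) = R" unfolding t_def by (simp add: add_pos_nonneg[of 1 "\<bar>K\<bar>", simplified] less_imp_neq[symmetric])
  have "t\<^sup>2 * K \<le> t\<^sup>2 * \<bar>K\<bar>" by (rule mult_left_mono) auto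
  also have "\<dots> = t * (t * \<bar>K\<bar>)" by (simp add: power2_eq_square)
  also have "t * \<bar>K\<bar> = R - t" using t1 by (simp add: algebra_simps)
  finally have "t\<^sup>2 * K \<le> t * (R - t)" .
  then have "-2 * t * R + t\<^sup>2 * K \<le> - t * R - t * t" by (simp add: algebra_simps)
  also have "\<dots> < 0" using mult_pos_pos[OF tp Rp] mult_pos_pos[OF tp tp] by linarith
  finally have "-2 * t * R + t\<^sup>2 * K < 0" .
  then show False using spec[OF all, of t] by linarith
qed

lemma exists_max_eig:
  assumes Pne: "P \<noteq> {}"
  shows "\<exists>l lam. (\<exists>i\<in>P. l i \<noteq> 0) \<and> (\<forall>i\<in>P. (\<Sum>j\<in>P. M i j * l j) = lam * Dg i * l i)
     \<and> (\<forall>y. Bf y y \<le> lam * Nf y)"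
proof -
  define S where "S = {a. Nf a = 1}"
  have N1: "Nf (\<lambda>_. 1) > 0" using Pne by (intro Nf_pos) auto
  define a0 :: "'a \<Rightarrow> real" where "a0 = (\<lambda>i. (1 / sqrt (Nf (\<lambda>_. 1))) * 1)"
  have "Nf a0 = 1" unfolding a0_def using Nf_scale[of "1 / sqrt (Nf (\<lambda>_. 1))" "\<lambda>_. 1"] N1
    by (simp add: power_divide)
  then have Sne: "S \<noteq> {}" unfolding S_def by blast
  define C where "C = 1 + (\<Sum>i\<in>P. 1 / Dg i)"
  have "(\<Sum>i\<in>P. 1 / Dg i) \<ge> 0"
  proof (intro sum_nonneg)
    fix x assume "x \<in> P" then show "0 \<le> 1 / Dg x" using Dg_pos[of x] by simp
  qed
  then have Cge: "C \<ge> 1" unfolding C_def by simp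
  have bnd: "\<bar>a i\<bar> \<le> C" if a: "a \<in> S" and i: "i \<in> P" for a i
  proof -
    have "Dg i * (a i)\<^sup>2 \<le> 1" using Nf_ge[OF i, of a] a by (simp add: S_def)
    then have "(a i)\<^sup>2 \<le> 1 / Dg i" using Dg_pos[OF i] by (simp add: field_simps)
    also have "1 / Dg i \<le> (\<Sum>i\<in>P. 1 / Dg i)"
      using Dg_pos i by (intro member_le_sum finP) (auto simp: less_imp_le)
    also have "\<dots> \<le> C\<^sup>2" using Cge unfolding C_def by (simp add: power2_eq_square algebra_simps)
    finally have "(a i)\<^sup>2 \<le> C\<^sup>2" .
    then show ?thesis using Cge by (simp add: abs_le_square_iff[symmetric])
  qed
  define KB where "KB = (\<Sum>i\<in>P. \<Sum>j\<in>P. C * \<bar>M i j\<bar> * C)"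
  have Bbnd: "Bf a a \<le> KB" if a: "a \<in> S" for a
  proof -
    have "Bf a a \<le> \<bar>Bf a a\<bar>" by simp
    also have "\<dots> \<le> (\<Sum>i\<in>P. \<bar>\<Sum>j\<in>P. a i * M i j * a j\<bar>)" unfolding Bf_def by (rule sum_abs)
    also have "\<dots> \<le> (\<Sum>i\<in>P. \<Sum>j\<in>P. \<bar>a i * M i j * a j\<bar>)" by (intro sum_mono sum_abs)
    also have "\<dots> \<le> KB" unfolding KB_def
    proof (intro sum_mono)
      fix i j assume i: "i \<in> P" and j: "j \<in> P"
      have "\<bar>a i * M i j * a j\<bar> = \<bar>a i\<bar> * \<bar>M i j\<bar> * \<bar>a j\<bar>" by (simp add: abs_mult)
      also have "\<dots> \<le> C * \<bar>M i j\<bar> * C"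
        using bnd[OF a i] bnd[OF a j] by (intro mult_mono) auto
      finally show "\<bar>a i * M i j * a j\<bar> \<le> C * \<bar>M i j\<bar> * C" .
    qed
    finally show ?thesis .
  qed
  define lam where "lam = Sup ((\<lambda>a. Bf a a) ` S)"
  have bdd: "bdd_above ((\<lambda>a. Bf a a) ` S)" using Bbnd by (intro bdd_aboveI[of _ KB]) auto
  have upper: "Bf a a \<le> lam" if "a \<in> S" for a
    unfolding lam_def using bdd that by (intro cSup_upper) auto
  have approx: "\<exists>a\<in>S. lam + - inverse (real (Suc n)) < Bf a a" for n
  proof -
    have "lam + - inverse (real (Suc n)) < lam" by simp
    then show ?thesis unfolding lam_def using Sne bdd by (simp add: less_cSup_iff)
  qed
  then obtain sq where sqS: "\<And>n. sq n \<in> S" and sqa: "\<And>n. lam + - inverse (real (Suc n)) < Bf (sq n) (sq n)"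
    by metis
  have "\<forall>d\<subseteq>P. \<exists>l::'a \<Rightarrow> real. \<exists>r::nat\<Rightarrow>nat. strict_mono r \<and>
      (\<forall>e>0. eventually (\<lambda>n. \<forall>i\<in>d. dist (sq (r n) i) (l i) < e) sequentially)"
  proof (rule compact_lemma_general[where proj="\<lambda>x k. x k" and unproj=id])
    show "finite P" by (rule finP)
    fix k assume k: "k \<in> P"
    show "bounded ((\<lambda>x. x k) ` range sq)"
      unfolding bounded_iff using bnd[OF sqS k] by (intro exI[of _ C]) auto
  qed auto
  then obtain l :: "'a \<Rightarrow> real" and r where r: "strict_mono r"
    and ev: "\<forall>e>0. eventually (\<lambda>n. \<forall>i\<in>P. dist (sq (r n) i) (l i) < e) sequentially"
    by blast
  have conv: "(\<lambda>n. sq (r n) i) \<longlonglongrightarrow> l i" if i: "i \<in> P" for i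
    unfolding tendsto_iff
  proof (intro allI impI)
    fix e :: real assume "e > 0"
    then have "eventually (\<lambda>n. \<forall>i\<in>P. dist (sq (r n) i) (l i) < e) sequentially"
      using ev by blast
    then show "eventually (\<lambda>n. dist (sq (r n) i) (l i) < e) sequentially"
      by (rule eventually_mono) (use i in blast)
  qed
  have cB: "(\<lambda>n. Bf (sq (r n)) (sq (r n))) \<longlonglongrightarrow> Bf l l"
    unfolding Bf_def by (intro tendsto_sum tendsto_mult tendsto_const conv)
  have cN: "(\<lambda>n. Nf (sq (r n))) \<longlonglongrightarrow> Nf l"
    unfolding Nf_def by (intro tendsto_sum tendsto_mult tendsto_const conv tendsto_power)
  have "(\<lambda>n. Nf (sq (r n))) = (\<lambda>n. 1)" using sqS by (auto simp: S_def)
  then have Nl: "Nf l = 1" using cN LIMSEQ_unique tendsto_const by metis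
  have cB2: "(\<lambda>n. Bf (sq (r n)) (sq (r n))) \<longlonglongrightarrow> lam"
  proof (rule tendsto_sandwich[of "\<lambda>n. lam + - inverse (real (Suc n))" _ _ "\<lambda>n. lam"])
    show "eventually (\<lambda>n. lam + - inverse (real (Suc n)) \<le> Bf (sq (r n)) (sq (r n))) sequentially"
    proof (intro always_eventually allI)
      fix n
      have "n \<le> r n" using seq_suble[OF r] by simp
      then have "inverse (real (Suc (r n))) \<le> inverse (real (Suc n))"
        by (simp add: le_imp_inverse_le)
      then show "lam + - inverse (real (Suc n)) \<le> Bf (sq (r n)) (sq (r n))"
        using sqa[of "r n"] by linarith
    qed
    show "eventually (\<lambda>n. Bf (sq (r n)) (sq (r n)) \<le> lam) sequentially"
      using upper sqS by (auto intro: always_eventually)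
    show "(\<lambda>n. lam + - inverse (real (Suc n))) \<longlonglongrightarrow> lam"
      by (rule LIMSEQ_inverse_real_of_nat_add_minus)
  qed simp
  have Bl: "Bf l l = lam" using LIMSEQ_unique[OF cB cB2] .
  have ray: "Bf y y \<le> lam * Nf y" for y
  proof (cases "Nf y = 0")
    case True
    then have "Bf y y = 0" using Nf_zero Bf_zero by blast
    then show ?thesis using True by simp
  next
    case False
    then have Np: "Nf y > 0" using Nf_nonneg[of y] by simp
    define c where "c = 1 / sqrt (Nf y)"
    have c2: "c\<^sup>2 = 1 / Nf y" using Np by (simp add: c_def power_divide)
    have "Nf (\<lambda>i. c * y i) = 1" using Nf_scale[of c y] c2 Np by simp
    then have "Bf (\<lambda>i. c * y i) (\<lambda>i. c * y i) \<le> lam" using upper by (simp add: S_def)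
    then have "Bf y y / Nf y \<le> lam" using Bf_scale[of c y] c2 by simp
    then show ?thesis using Np by (simp add: field_simps)
  qed
  define rr where "rr i = (\<Sum>j\<in>P. M i j * l j)" for i
  define w where "w i = rr i - lam * Dg i * l i" for i
  define R where "R = (\<Sum>i\<in>P. (w i)\<^sup>2)"
  define K where "K = lam * Nf w - Bf w w"
  have key: "lam * (\<Sum>i\<in>P. Dg i * l i * w i) - Bf l w = - R"
  proof -
    have "Bf l w = (\<Sum>i\<in>P. w i * rr i)" using Bsym[of l w] Bf_row[of w l] by (simp add: rr_def)
    moreover have wr: "lam * (Dg i * l i * w i) - w i * rr i = - (w i)\<^sup>2" for i
      by (simp add: w_def power2_eq_square algebra_simps)
    ultimately have "lam * (\<Sum>i\<in>P. Dg i * l i * w i) - Bf l w = (\<Sum>i\<in>P. - (w i)\<^sup>2)"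
      by (simp add: sum_distrib_left sum_subtractf[symmetric])
    then show ?thesis by (simp add: R_def sum_negf)
  qed
  have "\<forall>t. 0 \<le> -2 * t * R + t\<^sup>2 * K"
  proof
    fix t
    have "Bf (\<lambda>i. l i + t * w i) (\<lambda>i. l i + t * w i) \<le> lam * Nf (\<lambda>i. l i + t * w i)" by (rule ray)
    then have "Bf l l + 2 * t * Bf l w + t\<^sup>2 * Bf w w \<le>
        lam * (Nf l + 2 * t * (\<Sum>i\<in>P. Dg i * l i * w i) + t\<^sup>2 * Nf w)"
      by (simp only: Bf_expand Nf_expand)
    then have "0 \<le> 2 * t * (lam * (\<Sum>i\<in>P. Dg i * l i * w i) - Bf l w) + t\<^sup>2 * K"
      using Bl Nl unfolding K_def by (simp add: algebra_simps)
    then show "0 \<le> -2 * t * R + t\<^sup>2 * K" unfolding key by simp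
  qed
  moreover have "R \<ge> 0" unfolding R_def by (intro sum_nonneg) simp
  ultimately have R0: "R = 0" by (rule quad_aux)
  have w0: "\<forall>i\<in>P. w i = 0"
    using R0 unfolding R_def by (simp add: sum_nonneg_eq_0_iff[OF finP])
  have nz: "\<exists>i\<in>P. l i \<noteq> 0"
  proof (rule ccontr)
    assume "\<not> (\<exists>i\<in>P. l i \<noteq> 0)"
    then have "Nf l = 0" unfolding Nf_def by simp
    then show False using Nl by simp
  qed
  show ?thesis
    using nz w0 ray unfolding w_def rr_def by (intro exI[of _ l] exI[of _ lam]) auto
qed


lemma not_stable:
  assumes Pne: "P \<noteq> {}" and g: "gg \<ge> 0"
  shows "\<not> linearly_stable V E P \<gamma> \<delta> xb"
proof -
  obtain l lam where nz: "\<exists>i\<in>P. l i \<noteq> 0"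
    and eq: "\<forall>i\<in>P. (\<Sum>j\<in>P. M i j * l j) = lam * Dg i * l i"
    and ray: "\<forall>y. Bf y y \<le> lam * Nf y"
    using exists_max_eig[OF Pne] by blast
  have N1: "Nf (\<lambda>_. 1) > 0" using Pne by (intro Nf_pos) auto
  have "Bf (\<lambda>_. c) (\<lambda>_. c) = 2 * v * gg * (\<Sum>i\<in>P. bz i) * c\<^sup>2" for c using Qid[of "\<lambda>_. c"] by (simp add: sum_distrib_right cong: if_cong)
  moreover have "(\<Sum>i\<in>P. bz i) \<ge> 0" by (intro sum_nonneg) (simp add: bz_def)
  ultimately have "Bf (\<lambda>_. 1) (\<lambda>_. 1) \<ge> 0" using v_pos g by simp
  then have "lam * Nf (\<lambda>_. 1) \<ge> 0" using ray by (meson order_trans)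
  then have lam0: "lam \<ge> 0" using N1 by (simp add: zero_le_mult_iff)
  have ev: "is_eigenvalue_on P (jacobian V E \<gamma> \<delta> xb) (complex_of_real lam)"
    unfolding is_eigenvalue_on_def
  proof (intro exI[of _ "\<lambda>i. complex_of_real (l i)"] conjI ballI)
    show "\<exists>i\<in>P. complex_of_real (l i) \<noteq> 0" using nz by simp
  next
    fix i assume i: "i \<in> P"
    have "(\<Sum>j\<in>P. jacobian V E \<gamma> \<delta> xb i j * l j) = lam * l i"
      using jac_row[OF i, of l] eq i Dg_pos[OF i] by simp
    then have "(\<Sum>j\<in>P. complex_of_real (jacobian V E \<gamma> \<delta> xb i j) * complex_of_real (l j))
        = complex_of_real (lam * l i)"
      by (simp flip: of_real_mult of_real_sum)
    then show "(\<Sum>j\<in>P. complex_of_real (jacobian V E \<gamma> \<delta> xb i j) * complex_of_real (l j))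
        = complex_of_real lam * complex_of_real (l i)" by simp
  qed
  show ?thesis unfolding linearly_stable_def using ev lam0 by force
qed

lemma steady: "steady_state V E P \<gamma> \<delta> xb"
  unfolding steady_state_def sbcm_rhs_def using steady_num by simp

lemma stable_iff: "P \<noteq> {} \<Longrightarrow> linearly_stable V E P \<gamma> \<delta> xb \<longleftrightarrow> gg < 0"
  using not_stable eig_neg unfolding linearly_stable_def by force

end

theorem theorem6:
  fixes V :: "'a set" and E :: "'a \<Rightarrow> 'a \<Rightarrow> bool" and z1 z2 :: 'a and \<gamma> \<delta> :: real
  assumes graph: "simple_graph V E"
    and conn: "graph_connected V E"
    and zealots: "z1 \<in> V" "z2 \<in> V" "z1 \<noteq> z2"
    and persuadable_nonempty: "V - {z1, z2} \<noteq> {}"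
    and balanced: "\<forall>i \<in> V - {z1, z2}. E i z1 \<longleftrightarrow> E i z2"
    and params: "\<gamma> \<ge> 0" "\<delta> \<ge> 0"
  shows "steady_state V E (V - {z1, z2}) \<gamma> \<delta> (harmonic_state z1 z2)
       \<and> (linearly_stable V E (V - {z1, z2}) \<gamma> \<delta> (harmonic_state z1 z2)
            \<longleftrightarrow> 2 * \<gamma> * (1 - omega \<gamma> \<delta> 1) - 1 < 0)"
proof -
  interpret sb V E z1 z2 \<gamma> \<delta>
    using assms by unfold_locales auto
  show ?thesis using steady stable_iff[OF persuadable_nonempty] by (simp add: gg_def v_def)
qed

end
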